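(* There is a constant $C_0>0$ depending only on $\widetilde\mu$ such that the following holds. Let $\varepsilon\in(0,1)$ and let $\omega\in\Omega$ be such that there is $\widetilde n_0$ with $$\Big|L(E)-\frac1{n^2}\sum_{s=0}^{n^2-1}F_n(T^{\zeta_0+sn}\omega,E)\Big|<\varepsilon$$ for all $n,\zeta_0\in\mathbb Z$ with $n\ge\max(\widetilde n_0,(\log(|\zeta_0|+1))^{2/3})$ and all $E\in\hat\Sigma$. Then there exists $\widetilde n_1=\widetilde n_1(\omega,\varepsilon)$ such that: (1) for all $E\in\hat\Sigma$ and all $n,\zeta_0\in\mathbb Z$ with $n\ge\max(\widetilde n_1,\log^2(|\zeta_0|+1))$, $$\frac1n\log\|M_n^E(T^{\zeta_0}\omega)\|\le L(E)+2\varepsilon;$$ (2) for all $n,\zeta_0\in\mathbb Z$ with $n\ge\varepsilon^{-1}\max(\widetilde n_1,2\log^2(|\zeta_0|+1))$, all $E\in\hat\Sigma\setminus\sigma(H_{T^{\zeta_0}\omega,n})$ and all $j,k\in[0,n)$, $$|G^E_{T^{\zeta_0}\omega,n}(j,k)|\le\frac{\exp\big[(n-|j-k|)L(E)+C_0\varepsilon n\big]}{|\det[H_{T^{\zeta_0}\omega,n}-E]|}.$$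
   Context: Let $\widetilde\mu$ be a Borel probability measure on $\mathbb R$ with compact support $\mathcal A$ containing at least two points; $\Omega=\mathcal A^{\mathbb Z}$, $\mu=\widetilde\mu^{\mathbb Z}$, $(T\omega)_n=\omega_{n+1}$; $[H_\omega\psi](n)=\psi(n+1)+\psi(n-1)+\omega_n\psi(n)$ on $\ell^2(\mathbb Z)$. For $E\in\mathbb R$, $M^E(\alpha)=\begin{pmatrix}E-\alpha&-1\\1&0\end{pmatrix}$, $M_n^E(\omega)=M^E(\omega_{n-1})\cdots M^E(\omega_0)$ for $n\ge1$, $F_n(\omega,E)=\frac1n\log\|M_n^E(\omega)\|$, $L(E)=\lim_{n\to\infty}\frac1n\int\log\|M_n^E\|\,d\mu$. $\hat\Sigma=[-\kappa,\kappa]$ with $\kappa=2+\max_{\alpha\in\mathcal A}|\alpha|$. For $N\in\mathbb Z_+$, $H_{\omega,N}=P_{[0,N)}H_\omega P_{[0,N)}^*$ is the restriction of $H_\omega$ to $\ell^2([0,N)\cap\mathbb Z)$ ($P_\Lambda$ the coordinate projection), and $G^E_{\omega,N}(j,k)=\langle\delta_j,(H_{\omega,N}-E)^{-1}\delta_k\rangle$. *)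

theory Defs
  imports "HOL-Probability.Probability" "Jordan_Normal_Form.Char_Poly"
begin

definition msupp :: "real measure \<Rightarrow> real set" where
  "msupp m = {x. \<forall>U. open U \<and> x \<in> U \<longrightarrow> emeasure m U > 0}"

definition tm :: "real \<Rightarrow> real \<Rightarrow> real^2^2" where
  "tm E a = vector [vector [E - a, -1], vector [1, 0]]"

fun tmn :: "nat \<Rightarrow> real \<Rightarrow> (int \<Rightarrow> real) \<Rightarrow> real^2^2" where
  "tmn 0 E \<omega> = Finite_Cartesian_Product.mat 1"
| "tmn (Suc n) E \<omega> = tm E (\<omega> (int n)) ** tmn n E \<omega>"

definition mnorm :: "real^2^2 \<Rightarrow> real" where
  "mnorm A = onorm (\<lambda>x. A *v x)"

definition shift :: "int \<Rightarrow> (int \<Rightarrow> real) \<Rightarrow> (int \<Rightarrow> real)" where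
  "shift z \<omega> = (\<lambda>n. \<omega> (n + z))"

definition Fn :: "nat \<Rightarrow> (int \<Rightarrow> real) \<Rightarrow> real \<Rightarrow> real" where
  "Fn n \<omega> E = (1 / real n) * ln (mnorm (tmn n E \<omega>))"

definition prodm :: "real measure \<Rightarrow> (int \<Rightarrow> real) measure" where
  "prodm m = PiM (UNIV :: int set) (\<lambda>_. m)"

definition lyap :: "real measure \<Rightarrow> real \<Rightarrow> real" where
  "lyap m E = lim (\<lambda>n. (1 / real n) * integral\<^sup>L (prodm m) (\<lambda>\<omega>. ln (mnorm (tmn n E \<omega>))))"

definition kappa :: "real measure \<Rightarrow> real" where
  "kappa m = 2 + Sup (abs ` msupp m)"

definition SigmaHat :: "real measure \<Rightarrow> real set" where
  "SigmaHat m = {- kappa m .. kappa m}"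

definition Hres :: "(int \<Rightarrow> real) \<Rightarrow> nat \<Rightarrow> real Matrix.mat" where
  "Hres \<omega> N = Matrix.mat N N (\<lambda>(i, j). (if i = j then \<omega> (int i) else 0)
      + (if i = Suc j \<or> j = Suc i then 1 else 0))"

definition spec :: "real Matrix.mat \<Rightarrow> real set" where
  "spec A = {E. eigenvalue A E}"

definition shifted :: "real Matrix.mat \<Rightarrow> real \<Rightarrow> real Matrix.mat" where
  "shifted A E = A - E \<cdot>\<^sub>m 1\<^sub>m (dim_row A)"

definition green :: "(int \<Rightarrow> real) \<Rightarrow> nat \<Rightarrow> real \<Rightarrow> nat \<Rightarrow> nat \<Rightarrow> real" where
  "green \<omega> N E j k = (THE B. B \<in> carrier_mat N N \<and> inverts_mat (shifted (Hres \<omega> N) E) B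
       \<and> inverts_mat B (shifted (Hres \<omega> N) E)) $$ (j, k)"

end

theory Submission
  imports Defs
begin

no_notation Matrix.vec_index (infixl "$" 100)






lemma mnorm_entry: "\<bar>A $ i $ j\<bar> \<le> mnorm A"
proof -
  have "\<bar>(A *v axis j 1) $ i\<bar> \<le> norm (A *v axis j 1)" by (rule component_le_norm_cart)
  also have "\<dots> \<le> mnorm A * norm (axis j (1::real))" unfolding mnorm_def
    by (rule onorm) simp
  finally have "\<bar>(A *v axis j 1) $ i\<bar> \<le> mnorm A" by simp
  moreover have "(A *v axis j 1) $ i = A $ i $ j"
    by (simp add: matrix_vector_mult_def axis_def if_distrib cong: if_cong)
  ultimately show ?thesis by simp
qed

lemma mnorm_mult: "mnorm (A ** B) \<le> mnorm A * mnorm B"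
proof -
  have "(\<lambda>x. (A ** B) *v x) = (\<lambda>x. A *v x) \<circ> (\<lambda>x. B *v x)"
    by (auto simp: matrix_vector_mul_assoc)
  thus ?thesis unfolding mnorm_def by (metis onorm_compose matrix_vector_mul_bounded_linear)
qed

lemma mnorm_nonneg: "0 \<le> mnorm A"
  unfolding mnorm_def by (rule onorm_pos_le) simp

lemma mnorm_le2:
  fixes A :: "real^2^2"
  assumes "\<bar>A$1$1\<bar> + \<bar>A$2$1\<bar> \<le> c" "\<bar>A$1$2\<bar> + \<bar>A$2$2\<bar> \<le> c"
  shows "mnorm A \<le> 2*c"
  unfolding mnorm_def
proof (rule onorm_le)
  fix x :: "real^2"
  have eq: "A *v x = x$1 *\<^sub>R (\<chi> i. A$i$1) + x$2 *\<^sub>R (\<chi> i. A$i$2)"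
    unfolding Finite_Cartesian_Product.vec_eq_iff by (simp add: matrix_vector_mult_def sum_2 mult.commute)
  have n1: "norm (\<chi> i. A$i$1) \<le> \<bar>A$1$1\<bar> + \<bar>A$2$1\<bar>"
    unfolding norm_vec_def L2_set_def by (simp add: sum_2 sqrt_sum_squares_le_sum_abs)
  have n2: "norm (\<chi> i. A$i$2) \<le> \<bar>A$1$2\<bar> + \<bar>A$2$2\<bar>"
    unfolding norm_vec_def L2_set_def by (simp add: sum_2 sqrt_sum_squares_le_sum_abs)
  have "norm (A *v x) \<le> \<bar>x$1\<bar> * norm (\<chi> i. A$i$1) + \<bar>x$2\<bar> * norm (\<chi> i. A$i$2)"
  proof -
    have "norm (A *v x) \<le> norm (x$1 *\<^sub>R (\<chi> i. A$i$1)) + norm (x$2 *\<^sub>R (\<chi> i. A$i$2))"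
      unfolding eq by (rule norm_triangle_ineq)
    thus ?thesis by (simp only: norm_scaleR real_norm_def)
  qed
  also have "\<dots> \<le> norm x * c + norm x * c"
    using n1 n2 assms component_le_norm_cart[of x 1] component_le_norm_cart[of x 2]
    by (intro add_mono mult_mono; simp)
  finally show "norm (A *v x) \<le> (2*c) * norm x" by simp
qed
lemma tm_simps[simp]: "tm E a $ 1 $ 1 = E - a" "tm E a $ 1 $ 2 = -1" "tm E a $ 2 $ 1 = 1" "tm E a $ 2 $ 2 = 0"
  by (simp_all add: tm_def)

lemma mat1_simps[simp]: "(Finite_Cartesian_Product.mat 1 :: real^2^2) $ 1 $ 1 = 1"
  "(Finite_Cartesian_Product.mat 1 :: real^2^2) $ 1 $ 2 = 0"
  "(Finite_Cartesian_Product.mat 1 :: real^2^2) $ 2 $ 1 = 0"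
  "(Finite_Cartesian_Product.mat 1 :: real^2^2) $ 2 $ 2 = 1"
  by (simp_all add: Finite_Cartesian_Product.mat_def)

lemma mult2_simps: "((A::real^2^2) ** B) $ i $ j = A$i$1 * B$1$j + A$i$2 * B$2$j"
  by (simp add: matrix_matrix_mult_def sum_2)

lemma shift_shift[simp]: "shift a (shift b w) = shift (b + a) w"
  by (simp add: shift_def fun_eq_iff ac_simps)

lemma shift_0[simp]: "shift 0 w = w" by (simp add: shift_def)

lemma tmn_add: "tmn (a + b) E w = tmn b E (shift (int a) w) ** tmn a E w"
proof (induction b)
  case 0 then show ?case by simp
next
  case (Suc b)
  have "tmn (a + Suc b) E w = tm E (w (int (a+b))) ** tmn (a+b) E w" by simp
  also have "\<dots> = tm E (shift (int a) w (int b)) ** (tmn b E (shift (int a) w) ** tmn a E w)"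
    using Suc by (simp add: shift_def add.commute)
  also have "\<dots> = tmn (Suc b) E (shift (int a) w) ** tmn a E w" by (simp add: matrix_mul_assoc)
  finally show ?case .
qed

lemma det_tmn: "Determinants.det (tmn n E w) = 1"
proof (induction n)
  case 0 then show ?case by simp
next
  case (Suc n)
  have "Determinants.det (tm E a) = 1" for a by (simp add: det_2)
  then show ?case using Suc by (simp add: Determinants.det_mul)
qed

lemma mnorm_det1: assumes "Determinants.det (A::real^2^2) = 1" shows "mnorm A \<ge> 1/2"
proof (rule ccontr)
  assume "\<not> ?thesis"
  hence h: "mnorm A < 1/2" by simp
  define m where "m = mnorm A"
  have e: "\<bar>A$i$j\<bar> \<le> m" for i j unfolding m_def by (rule mnorm_entry)
  have m0: "0 \<le> m" unfolding m_def by (rule mnorm_nonneg)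
  have p1: "\<bar>A$1$1\<bar> * \<bar>A$2$2\<bar> \<le> m * m" by (rule mult_mono[OF e e m0 abs_ge_zero])
  have p2: "\<bar>A$1$2\<bar> * \<bar>A$2$1\<bar> \<le> m * m" by (rule mult_mono[OF e e m0 abs_ge_zero])
  have h': "m < 1/2" using h unfolding m_def .
  have "m * m \<le> m * (1/2)" using h' m0 by (intro mult_left_mono) auto
  hence mm: "m * m < 1/4" using h' by linarith
  have "\<bar>A$1$1 * A$2$2 - A$1$2 * A$2$1\<bar> \<le> \<bar>A$1$1\<bar> * \<bar>A$2$2\<bar> + \<bar>A$1$2\<bar> * \<bar>A$2$1\<bar>"
    using abs_triangle_ineq4[of "A$1$1 * A$2$2" "A$1$2 * A$2$1"] by (simp only: abs_mult)
  hence "\<bar>A$1$1 * A$2$2 - A$1$2 * A$2$1\<bar> < 1" using p1 p2 mm by linarith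
  with assms show False by (simp add: det_2)
qed

lemma mnorm_tmn_pos: "mnorm (tmn n E w) \<ge> 1/2"
  by (rule mnorm_det1[OF det_tmn])

lemma mnorm_tm: "mnorm (tm E a) \<le> 2 * (\<bar>E - a\<bar> + 1)"
  by (rule mnorm_le2) auto

definition tminv :: "real \<Rightarrow> real \<Rightarrow> real^2^2" where
  "tminv E a = vector [vector [0, 1], vector [-1, E - a]]"

lemma tminv_simps[simp]: "tminv E a $ 1 $ 1 = 0" "tminv E a $ 1 $ 2 = 1" "tminv E a $ 2 $ 1 = -1" "tminv E a $ 2 $ 2 = E - a"
  by (simp_all add: tminv_def)

lemma eq22: "(A::real^2^2) = B \<longleftrightarrow> A$1$1 = B$1$1 \<and> A$1$2 = B$1$2 \<and> A$2$1 = B$2$1 \<and> A$2$2 = B$2$2"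
  by (auto simp: Finite_Cartesian_Product.vec_eq_iff forall_2)

lemma tminv_tm: "tminv E a ** tm E a = Finite_Cartesian_Product.mat 1"
  by (simp add: eq22 mult2_simps)

fun tmninv :: "nat \<Rightarrow> real \<Rightarrow> (int \<Rightarrow> real) \<Rightarrow> real^2^2" where
  "tmninv 0 E w = Finite_Cartesian_Product.mat 1"
| "tmninv (Suc n) E w = tmninv n E w ** tminv E (w (int n))"

lemma tmninv_tmn: "tmninv n E w ** tmn n E w = Finite_Cartesian_Product.mat 1"
proof (induction n)
  case 0 then show ?case by simp
next
  case (Suc n)
  have "tmninv (Suc n) E w ** tmn (Suc n) E w = tmninv n E w ** ((tminv E (w (int n)) ** tm E (w (int n))) ** tmn n E w)"
    by (simp add: matrix_mul_assoc)
  also have "\<dots> = Finite_Cartesian_Product.mat 1" using Suc by (simp add: tminv_tm)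
  finally show ?case .
qed

lemma mnorm_tminv: "mnorm (tminv E a) \<le> 2 * (\<bar>E - a\<bar> + 1)"
  by (rule mnorm_le2) auto

lemma mnorm_one: "mnorm (Finite_Cartesian_Product.mat 1 :: real^2^2) \<le> 1"
  unfolding mnorm_def by (rule onorm_le) simp

lemma mnorm_tmn_le:
  assumes "\<And>t. \<bar>E - w t\<bar> \<le> b"
  shows "mnorm (tmn n E w) \<le> (2*(b+1))^n"
proof (induction n)
  case 0 then show ?case using mnorm_one by simp
next
  case (Suc n)
  have "mnorm (tmn (Suc n) E w) \<le> mnorm (tm E (w (int n))) * mnorm (tmn n E w)"
    by (simp add: mnorm_mult)
  also have "\<dots> \<le> (2*(b+1)) * (2*(b+1))^n"
    using Suc mnorm_tm[of E "w (int n)"] assms[of "int n"] mnorm_nonneg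
    by (intro mult_mono) auto
  finally show ?case by simp
qed

lemma mnorm_tmninv_le:
  assumes "\<And>t. \<bar>E - w t\<bar> \<le> b"
  shows "mnorm (tmninv n E w) \<le> (2*(b+1))^n"
proof (induction n)
  case 0 then show ?case using mnorm_one by simp
next
  case (Suc n)
  have "mnorm (tmninv (Suc n) E w) \<le> mnorm (tmninv n E w) * mnorm (tminv E (w (int n)))"
    by (simp add: mnorm_mult)
  also have "\<dots> \<le> (2*(b+1))^n * (2*(b+1))"
    using Suc mnorm_tminv[of E "w (int n)"] assms[of "int n"] mnorm_nonneg
    by (intro mult_mono) auto
  finally show ?case by (simp add: mult.commute)
qed

fun P :: "(nat \<Rightarrow> real) \<Rightarrow> nat \<Rightarrow> real" where
  "P d 0 = 1"
| "P d (Suc 0) = d 0"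
| "P d (Suc (Suc n)) = d (Suc n) * P d (Suc n) - P d n"

lemma tmn_P: "(tmn n E w) $ 1 $ 1 = (-1)^n * P (\<lambda>t. w (int t) - E) n \<and>
   (tmn n E w) $ 2 $ 1 = (if n = 0 then 0 else (-1)^(n-1) * P (\<lambda>t. w (int t) - E) (n-1))"
proof (induction n)
  case 0 then show ?case by simp
next
  case (Suc n)
  show ?case
  proof (cases n)
    case 0 then show ?thesis by (simp add: mult2_simps)
  next
    case (Suc k)
    have a: "tmn (Suc k) E w $ 1 $ 1 = (-1)^(Suc k) * P (\<lambda>t. w (int t) - E) (Suc k)"
      and b: "tmn (Suc k) E w $ 2 $ 1 = (-1)^k * P (\<lambda>t. w (int t) - E) k"
      using Suc.IH unfolding Suc by auto
    have e: "tmn (Suc (Suc k)) E w = tm E (w (int (Suc k))) ** tmn (Suc k) E w" by simp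
    show ?thesis unfolding Suc e mult2_simps a b tm_simps
      by (simp add: algebra_simps)

  qed
qed



lemma P_step: "P d (Suc j) = d j * P d j - (if j = 0 then 0 else P d (j - 1))"
  by (cases j) auto

lemma P_first: "P d (Suc (Suc m)) = d 0 * P (\<lambda>t. d (Suc t)) (Suc m) - P (\<lambda>t. d (Suc (Suc t))) m"
proof (induction m arbitrary: d rule: less_induct)
  case (less m)
  show ?case
  proof (cases m)
    case 0 then show ?thesis by (simp add: algebra_simps)
  next
    case (Suc m')
    show ?thesis
    proof (cases m')
      case 0 then show ?thesis using Suc by (simp add: algebra_simps)
    next
      case (Suc k)
      have i1: "P d (Suc (Suc (Suc k))) = d 0 * P (\<lambda>t. d (Suc t)) (Suc (Suc k)) - P (\<lambda>t. d (Suc (Suc t))) (Suc k)"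
        using less[of "Suc k"] \<open>m = Suc m'\<close> Suc by simp
      have i2: "P d (Suc (Suc k)) = d 0 * P (\<lambda>t. d (Suc t)) (Suc k) - P (\<lambda>t. d (Suc (Suc t))) k"
        using less[of k] \<open>m = Suc m'\<close> Suc by simp
      have "P d (Suc (Suc m)) = d (Suc (Suc (Suc k))) * P d (Suc (Suc (Suc k))) - P d (Suc (Suc k))"
        using \<open>m = Suc m'\<close> Suc by simp
      also have "\<dots> = d 0 * P (\<lambda>t. d (Suc t)) (Suc m) - P (\<lambda>t. d (Suc (Suc t))) m"
        unfolding i1 i2 using \<open>m = Suc m'\<close> Suc by (simp add: algebra_simps)
      finally show ?thesis .
    qed
  qed
qed

definition Qf :: "(nat \<Rightarrow> real) \<Rightarrow> nat \<Rightarrow> nat \<Rightarrow> real" where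
  "Qf d n i = P (\<lambda>t. d (t + i)) (n - i)"

lemma Qf_n[simp]: "Qf d n n = 1" by (simp add: Qf_def)

lemma Qf_rec: assumes "i < n"
  shows "Qf d n i = d i * Qf d n (Suc i) - (if Suc i < n then Qf d n (Suc (Suc i)) else 0)"
proof (cases "Suc i < n")
  case True
  then obtain m where m: "n - i = Suc (Suc m)" by (metis Suc_diff_Suc Suc_lessD less_imp_Suc_add add_diff_cancel_left')
  have m1: "n - Suc i = Suc m" and m2: "n - Suc (Suc i) = m" using m by auto
  show ?thesis using True unfolding Qf_def m m1 m2 P_first by (simp add: ac_simps)
next
  case False
  hence "n - i = Suc 0" "n - Suc i = 0" using assms by auto
  then show ?thesis using False unfolding Qf_def by simp
qed

lemma wronski: assumes "k < n"
  shows "P d (Suc k) * Qf d n (Suc k) - (if Suc k < n then P d k * Qf d n (Suc (Suc k)) else 0) = P d n"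
proof -
  have "\<forall>k. k + m + 1 = n \<longrightarrow> P d (Suc k) * Qf d n (Suc k) - (if Suc k < n then P d k * Qf d n (Suc (Suc k)) else 0) = P d n" for m
  proof (induction m)
    case 0 then show ?case by auto
  next
    case (Suc m)
    show ?case
    proof (intro allI impI)
      fix k assume k: "k + Suc m + 1 = n"
      have ih: "P d (Suc (Suc k)) * Qf d n (Suc (Suc k)) - (if Suc (Suc k) < n then P d (Suc k) * Qf d n (Suc (Suc (Suc k))) else 0) = P d n"
        using Suc.IH[rule_format, of "Suc k"] k by (simp only: add_Suc add_Suc_right)
      have q: "Qf d n (Suc k) = d (Suc k) * Qf d n (Suc (Suc k)) - (if Suc (Suc k) < n then Qf d n (Suc (Suc (Suc k))) else 0)"
        using k by (intro Qf_rec) auto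
      have sk: "Suc k < n" using k by auto
      have pk: "P d (Suc (Suc k)) = d (Suc k) * P d (Suc k) - P d k" by simp
      show "P d (Suc k) * Qf d n (Suc k) - (if Suc k < n then P d k * Qf d n (Suc (Suc k)) else 0) = P d n"
        using ih unfolding q pk if_P[OF sk] by (cases "Suc (Suc k) < n") (simp_all add: algebra_simps)
    qed
  qed
  moreover have "k + (n - k - 1) + 1 = n" using assms by simp
  ultimately show ?thesis by blast
qed




abbreviation Am :: "(int \<Rightarrow> real) \<Rightarrow> nat \<Rightarrow> real \<Rightarrow> real Matrix.mat" where
  "Am w n E \<equiv> shifted (Hres w n) E"

lemma Am_carrier: "Am w n E \<in> carrier_mat n n"
  unfolding shifted_def Hres_def by (rule minus_carrier_mat) auto

lemma Am_dims[simp]: "dim_row (Am w n E) = n" "dim_col (Am w n E) = n"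
  using Am_carrier[of w n E] by auto

lemma Am_index: "i < n \<Longrightarrow> j < n \<Longrightarrow> Am w n E $$ (i,j) =
   (if i = j then w (int i) - E else 0) + (if i = Suc j \<or> j = Suc i then 1 else 0)"
  by (simp add: shifted_def Hres_def)

lemma det00: "(A :: real Matrix.mat) \<in> carrier_mat 0 0 \<Longrightarrow> Determinant.det A = 1"
proof -
  assume "A \<in> carrier_mat 0 0"
  hence "A = 1\<^sub>m 0" by (intro eq_matI) auto
  thus ?thesis by simp
qed

lemma det_Am: "Determinant.det (Am w n E) = P (\<lambda>t. w (int t) - E) n"
proof (induction n rule: less_induct)
  case (less n)
  show ?case
  proof (cases n)
    case 0
    then show ?thesis using det00[OF Am_carrier[of w 0 E]] by simp
  next
    case (Suc n')
    show ?thesis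
    proof (cases n')
      case 0
      have "Determinant.det (Am w 1 E) = (\<Sum>j<1. Am w 1 E $$ (0,j) * cofactor (Am w 1 E) 0 j)"
        by (rule laplace_expansion_row[OF Am_carrier]) simp
      also have "\<dots> = Am w 1 E $$ (0,0) * cofactor (Am w 1 E) 0 0" by simp
      also have "cofactor (Am w 1 E) 0 0 = 1"
        unfolding cofactor_def using det00[OF mat_delete_carrier[OF Am_carrier[of w 1 E], simplified]] by simp
      finally show ?thesis using Suc 0 by (simp add: Am_index)
    next
      case (Suc k)
      have n: "n = Suc (Suc k)" using Suc \<open>n = Suc n'\<close> by simp
      define A where "A = Am w (Suc (Suc k)) E"
      have Ac: "A \<in> carrier_mat (Suc (Suc k)) (Suc (Suc k))" unfolding A_def by (rule Am_carrier)
      have "Determinant.det A = (\<Sum>j<Suc (Suc k). A $$ (Suc k,j) * cofactor A (Suc k) j)"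
        by (rule laplace_expansion_row[OF Ac]) simp
      also have "\<dots> = (\<Sum>j<k. A $$ (Suc k,j) * cofactor A (Suc k) j) + A $$ (Suc k, k) * cofactor A (Suc k) k
          + A $$ (Suc k, Suc k) * cofactor A (Suc k) (Suc k)" by simp
      also have "(\<Sum>j<k. A $$ (Suc k,j) * cofactor A (Suc k) j) = 0"
        by (rule sum.neutral) (auto simp: A_def Am_index)
      also have "A $$ (Suc k, k) = 1"
        by (auto simp: A_def Am_index)
      also have "A $$ (Suc k, Suc k) = w (int (Suc k)) - E"
        by (auto simp: A_def Am_index)
      also have "cofactor A (Suc k) (Suc k) = P (\<lambda>t. w (int t) - E) (Suc k)"
      proof -
        have "mat_delete A (Suc k) (Suc k) = Am w (Suc k) E"
          by (rule eq_matI) (auto simp: A_def mat_delete_def Am_index shifted_def Hres_def)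
        thus ?thesis unfolding cofactor_def using less[of "Suc k"] n by simp
      qed
      also have "cofactor A (Suc k) k = - P (\<lambda>t. w (int t) - E) k"
      proof -
        define M where "M = mat_delete A (Suc k) k"
        have Mc: "M \<in> carrier_mat (Suc k) (Suc k)" unfolding M_def using mat_delete_carrier[OF Ac] by simp
        have "Determinant.det M = (\<Sum>i<Suc k. M $$ (i,k) * cofactor M i k)"
          by (rule laplace_expansion_column[OF Mc]) simp
        also have "\<dots> = (\<Sum>i<Suc k. if i = k then cofactor M i k else 0)"
          by (rule sum.cong) (auto simp: M_def A_def mat_delete_def Am_index)
        also have "\<dots> = cofactor M k k" by simp
        also have "mat_delete M k k = Am w k E"
          by (rule eq_matI) (auto simp: M_def A_def mat_delete_def Am_index shifted_def Hres_def)
        hence "cofactor M k k = P (\<lambda>t. w (int t) - E) k"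
          unfolding cofactor_def using less[of k] n by simp
        finally have "Determinant.det M = P (\<lambda>t. w (int t) - E) k" .
        thus ?thesis unfolding cofactor_def M_def[symmetric] by simp
      qed
      finally show ?thesis unfolding A_def n by (simp add: algebra_simps)
    qed
  qed
qed




definition gf :: "(nat \<Rightarrow> real) \<Rightarrow> nat \<Rightarrow> nat \<Rightarrow> nat \<Rightarrow> real" where
  "gf d n k l = (-1)^(l+k) * P d (min l k) * Qf d n (Suc (max l k)) / P d n"

lemma green_rows:
  assumes i: "i < n" and k: "k < n" and c: "P d n \<noteq> 0"
  shows "(if 0 < i then gf d n k (i-1) else 0) + d i * gf d n k i + (if Suc i < n then gf d n k (Suc i) else 0)
     = (if i = k then 1 else 0)"
proof -
  consider "i < k" | "i = k" | "k < i" by linarith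
  then show ?thesis
  proof cases
    case 1
    show ?thesis
    proof (cases i)
      case 0
      then show ?thesis using 1 k by (simp add: gf_def min_def max_def power_add algebra_simps)
    next
      case (Suc i')
      have p: "P d (Suc (Suc i')) = d (Suc i') * P d (Suc i') - P d i'" by simp
      show ?thesis using 1 k unfolding Suc
        by (simp add: gf_def min_def max_def power_add p algebra_simps add_divide_distrib diff_divide_distrib)
    qed
  next
    case 2
    have w: "P d (Suc k) * Qf d n (Suc k) - (if Suc k < n then P d k * Qf d n (Suc (Suc k)) else 0) = P d n"
      by (rule wronski[OF k])
    have p: "P d (Suc k) = d k * P d k - (if k = 0 then 0 else P d (k - 1))" by (rule P_step)
    have "(if 0 < k then gf d n k (k-1) else 0) + d k * gf d n k k + (if Suc k < n then gf d n k (Suc k) else 0)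
       = (P d (Suc k) * Qf d n (Suc k) - (if Suc k < n then P d k * Qf d n (Suc (Suc k)) else 0)) / P d n"
    proof (cases k)
      case 0 then show ?thesis using p by (simp add: gf_def min_def max_def power_add algebra_simps add_divide_distrib diff_divide_distrib)
    next
      case (Suc k')
      then show ?thesis using p by (simp add: gf_def min_def max_def power_add algebra_simps add_divide_distrib diff_divide_distrib)
    qed
    note eq = this
    show ?thesis unfolding 2 eq w using c by simp
  next
    case 3
    then obtain i' where i': "i = Suc i'" and ki: "k \<le> i'" by (cases i) auto
    have q: "Qf d n (Suc i') = d (Suc i') * Qf d n (Suc (Suc i')) - (if Suc (Suc i') < n then Qf d n (Suc (Suc (Suc i'))) else 0)"
      using i i' by (intro Qf_rec) auto
    show ?thesis using ki i unfolding i'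
      by (simp add: gf_def min_def max_def power_add q algebra_simps add_divide_distrib diff_divide_distrib)
  qed
qed

lemma tri_sum:
  assumes i: "i < n"
  shows "(\<Sum>l\<in>{0..<n}. Am w n E $$ (i,l) * f l) =
    (if 0 < i then f (i-1) else 0) + (w (int i) - E) * f i + (if Suc i < n then f (Suc i) else 0)"
proof -
  have "(\<Sum>l\<in>{0..<n}. Am w n E $$ (i,l) * f l) =
     (\<Sum>l\<in>{0..<n}. (if l = i then (w (int i) - E) * f l else 0) + (if Suc l = i then f l else 0)
         + (if l = Suc i then f l else 0))"
    by (rule sum.cong) (auto simp: Am_index i)
  also have "\<dots> = (\<Sum>l\<in>{0..<n}. if l = i then (w (int i) - E) * f l else 0) + (\<Sum>l\<in>{0..<n}. if Suc l = i then f l else 0)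
         + (\<Sum>l\<in>{0..<n}. if l = Suc i then f l else 0)"
    by (simp add: sum.distrib)
  also have "(\<Sum>l\<in>{0..<n}. if Suc l = i then f l else 0) = (if 0 < i then f (i-1) else 0)"
  proof (cases i)
    case 0 then show ?thesis by simp
  next
    case (Suc i')
    have "(\<Sum>l\<in>{0..<n}. if Suc l = i then f l else 0) = (\<Sum>l\<in>{0..<n}. if l = i' then f l else 0)"
      unfolding Suc by simp
    also have "\<dots> = f i'" using i Suc by (simp add: sum.delta)
    finally show ?thesis using Suc by simp
  qed
  finally show ?thesis using i by (simp add: sum.delta)
qed

definition Gm :: "(nat \<Rightarrow> real) \<Rightarrow> nat \<Rightarrow> real Matrix.mat" where
  "Gm d n = Matrix.mat n n (\<lambda>(l,k). gf d n k l)"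

lemma Gm_carrier: "Gm d n \<in> carrier_mat n n" by (simp add: Gm_def)

lemma AG:
  assumes c: "P (\<lambda>t. w (int t) - E) n \<noteq> 0"
  shows "Am w n E * Gm (\<lambda>t. w (int t) - E) n = 1\<^sub>m n"
proof (rule eq_matI)
  fix i k assume i: "i < dim_row (1\<^sub>m n :: real Matrix.mat)" and k: "k < dim_col (1\<^sub>m n :: real Matrix.mat)"
  hence i: "i < n" and k: "k < n" by auto
  define d where "d = (\<lambda>t. w (int t) - E)"
  have "(Am w n E * Gm d n) $$ (i,k) = (\<Sum>l\<in>{0..<n}. Am w n E $$ (i,l) * gf d n k l)"
    using i k by (simp add: Gm_def scalar_prod_def)
  also have "\<dots> = (if 0 < i then gf d n k (i-1) else 0) + d i * gf d n k i + (if Suc i < n then gf d n k (Suc i) else 0)"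
    unfolding tri_sum[OF i] d_def ..
  also have "\<dots> = (if i = k then 1 else 0)"
    by (rule green_rows[OF i k]) (use c d_def in simp)
  finally show "(Am w n E * Gm (\<lambda>t. w (int t) - E) n) $$ (i,k) = 1\<^sub>m n $$ (i,k)"
    using i k unfolding d_def by simp
qed (auto simp: Gm_def)

lemma green_eq:
  assumes c: "P (\<lambda>t. w (int t) - E) n \<noteq> 0"
  shows "green w n E j k = Gm (\<lambda>t. w (int t) - E) n $$ (j,k)"
proof -
  define G where "G = Gm (\<lambda>t. w (int t) - E) n"
  have Gc: "G \<in> carrier_mat n n" unfolding G_def by (rule Gm_carrier)
  have AG': "Am w n E * G = 1\<^sub>m n" unfolding G_def by (rule AG[OF c])
  have GA: "G * Am w n E = 1\<^sub>m n" by (rule mat_mult_left_right_inverse[OF Am_carrier Gc AG'])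
  have "(THE B. B \<in> carrier_mat n n \<and> inverts_mat (Am w n E) B \<and> inverts_mat B (Am w n E)) = G"
  proof (rule the_equality)
    show "G \<in> carrier_mat n n \<and> inverts_mat (Am w n E) G \<and> inverts_mat G (Am w n E)"
      using Gc AG' GA unfolding inverts_mat_def by auto
  next
    fix B assume B: "B \<in> carrier_mat n n \<and> inverts_mat (Am w n E) B \<and> inverts_mat B (Am w n E)"
    hence Bc: "B \<in> carrier_mat n n" and BA: "B * Am w n E = 1\<^sub>m n" unfolding inverts_mat_def by auto
    have "B = B * (Am w n E * G)" using Bc AG' by simp
    also have "\<dots> = (B * Am w n E) * G" using assoc_mult_mat[OF Bc Am_carrier Gc] by simp
    also have "\<dots> = G" using BA Gc by simp
    finally show "B = G" .
  qed
  thus ?thesis unfolding green_def G_def by simp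
qed

lemma det_nonzero:
  assumes "E \<notin> spec (Hres w n)"
  shows "Determinant.det (Am w n E) \<noteq> 0"
proof -
  have Hc: "Hres w n \<in> carrier_mat n n" by (simp add: Hres_def)
  have "char_matrix (Hres w n) E = Am w n E"
    by (rule eq_matI) (auto simp: char_matrix_def shifted_def Hres_def)
  thus ?thesis using assms eigenvalue_det[OF Hc, of E] unfolding spec_def by auto
qed

lemma green_bound:
  assumes "E \<notin> spec (Hres w n)" and j: "j < n" and k: "k < n"
  shows "\<bar>green w n E j k\<bar> * \<bar>Determinant.det (Am w n E)\<bar> =
     \<bar>P (\<lambda>t. w (int t) - E) (min j k)\<bar> * \<bar>Qf (\<lambda>t. w (int t) - E) n (Suc (max j k))\<bar>"
proof -
  define d where "d = (\<lambda>t. w (int t) - E)"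
  have dn: "Determinant.det (Am w n E) = P d n" unfolding d_def by (rule det_Am)
  have c: "P d n \<noteq> 0" using det_nonzero[OF assms(1)] dn by simp
  have g: "green w n E j k = gf d n k j" using green_eq[of w E n j k] c j k unfolding d_def by (simp add: Gm_def)
  show ?thesis unfolding g dn d_def[symmetric] using c
    by (simp add: gf_def abs_mult min.commute max.commute)
qed

lemma Qf_shift: "Qf (\<lambda>t. w (int t) - E) n s = P (\<lambda>t. shift (int s) w (int t) - E) (n - s)"
  unfolding Qf_def shift_def by simp




lemma mnorm_tmn_gt0: "0 < mnorm (tmn n E w)"
  using mnorm_tmn_pos[of n E w] by linarith

lemma ln_mnorm_lower: "- 1 \<le> ln (mnorm (tmn n E w))"
proof -
  have "ln (1/2) \<le> ln (mnorm (tmn n E w))" using mnorm_tmn_pos[of n E w] by (simp add: ln_le_cancel_iff)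
  moreover have "ln (1/2::real) = - ln 2" by (simp add: ln_div)
  moreover have "ln (2::real) \<le> 1" using ln_2_less_1 by simp
  ultimately show ?thesis by linarith
qed

lemma ln_mnorm_upper:
  assumes "\<And>t. \<bar>E - w t\<bar> \<le> b" "0 \<le> b"
  shows "ln (mnorm (tmn n E w)) \<le> real n * ln (2*(b+1))"
proof -
  have "ln (mnorm (tmn n E w)) \<le> ln ((2*(b+1))^n)"
    using mnorm_tmn_le[of E w b n] assms mnorm_tmn_gt0[of n E w] by (simp add: ln_le_cancel_iff)
  also have "\<dots> = real n * ln (2*(b+1))" using assms(2) by (simp add: ln_realpow)
  finally show ?thesis .
qed

lemma Fn_bounds:
  assumes "\<And>t. \<bar>E - w t\<bar> \<le> b" "0 \<le> b" "1 \<le> q"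
  shows "- 1 \<le> Fn q w E" "Fn q w E \<le> ln (2*(b+1))"
proof -
  have q: "0 < real q" "1 \<le> real q" using assms(3) by auto
  have l: "- 1 \<le> ln (mnorm (tmn q E w))" by (rule ln_mnorm_lower)
  have "- 1 \<le> - 1 / real q" using q by (simp add: field_simps)
  also have "\<dots> \<le> ln (mnorm (tmn q E w)) / real q"
    by (rule divide_right_mono[OF l]) (use q in simp)
  also have "\<dots> = (1 / real q) * ln (mnorm (tmn q E w))" by simp
  finally show "- 1 \<le> Fn q w E" unfolding Fn_def .
  have "(1 / real q) * ln (mnorm (tmn q E w)) \<le> (1 / real q) * (real q * ln (2*(b+1)))"
    using ln_mnorm_upper[OF assms(1,2), of q] q by (intro mult_left_mono) auto
  also have "\<dots> = ln (2*(b+1))" using q by simp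
  finally show "Fn q w E \<le> ln (2*(b+1))" unfolding Fn_def .
qed

lemma subadd:
  "ln (mnorm (tmn (q*p) E w)) \<le> (\<Sum>s<q. ln (mnorm (tmn p E (shift (int s * int p) w))))"
proof (induction q)
  case 0
  have "mnorm (tmn 0 E w) \<le> 1" using mnorm_one by simp
  hence "ln (mnorm (tmn 0 E w)) \<le> 0" using mnorm_tmn_gt0[of 0 E w] by simp
  then show ?case by simp
next
  case (Suc q)
  have e: "tmn (Suc q * p) E w = tmn p E (shift (int (q*p)) w) ** tmn (q*p) E w"
    using tmn_add[of "q*p" p E w] by (simp add: add.commute)
  have "ln (mnorm (tmn (Suc q * p) E w)) \<le> ln (mnorm (tmn p E (shift (int (q*p)) w)) * mnorm (tmn (q*p) E w))"
  proof -
    have pos: "0 < mnorm (tmn p E (shift (int (q*p)) w) ** tmn (q*p) E w)"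
      using mnorm_tmn_gt0[of "Suc q * p" E w] unfolding e .
    show ?thesis unfolding e using mnorm_mult pos mnorm_tmn_gt0
      by (subst ln_le_cancel_iff) (auto intro: mult_pos_pos)
  qed
  also have "\<dots> = ln (mnorm (tmn p E (shift (int (q*p)) w))) + ln (mnorm (tmn (q*p) E w))"
    by (rule ln_mult_pos[OF mnorm_tmn_gt0 mnorm_tmn_gt0])
  also have "\<dots> \<le> ln (mnorm (tmn p E (shift (int q * int p) w))) + (\<Sum>s<q. ln (mnorm (tmn p E (shift (int s * int p) w))))"
    using Suc by simp
  finally show ?case by (simp add: add.commute)
qed

lemma ln_sq_small:
  fixes x :: real
  assumes "1 \<le> x"
  shows "(ln x)^2 \<le> 16 * sqrt x"
proof -
  have x0: "0 < x" using assms by simp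
  have "ln x = 4 * ln (x powr (1/4))" using x0 by (simp add: ln_powr)
  also have "\<dots> \<le> 4 * (x powr (1/4))" using ln_le_minus_one[of "x powr (1/4)"] x0 by simp
  finally have a: "ln x \<le> 4 * x powr (1/4)" .
  have b: "0 \<le> ln x" using assms by simp
  have "(ln x)^2 \<le> (4 * x powr (1/4))^2" using a b by (intro power_mono) auto
  also have "\<dots> = 16 * (x powr (1/4))^2" by (simp add: power_mult_distrib)
  also have "(x powr (1/4))^2 = x powr (1/2)" using x0 by (simp add: powr_realpow[symmetric] powr_powr)
  also have "x powr (1/2) = sqrt x" using x0 by (simp add: powr_half_sqrt)
  finally show ?thesis .
qed

lemma ln_growth:
  fixes \<epsilon> :: real
  assumes e: "0 < \<epsilon>" and n: "4096 / \<epsilon>^2 \<le> real n" "1 \<le> n"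
  shows "2 * (ln (real n + 1))^2 \<le> \<epsilon> * real n"
proof -
  have n1: "1 \<le> real n" using n by simp
  have "2 * (ln (real n + 1))^2 \<le> 2 * (16 * sqrt (real n + 1))"
    using ln_sq_small[of "real n + 1"] by simp
  also have "sqrt (real n + 1) \<le> sqrt (4 * real n)" using n1 by simp
  also have "sqrt (4 * real n) = 2 * sqrt (real n)" by (simp add: real_sqrt_mult)
  also have "2 * (16 * (2 * sqrt (real n))) = 64 * sqrt (real n)" by simp
  also have "\<dots> \<le> \<epsilon> * real n"
  proof -
    have "4096 \<le> \<epsilon>^2 * real n" using n e by (simp add: field_simps)
    hence "sqrt (64^2) \<le> sqrt (\<epsilon>^2 * real n)" by (intro real_sqrt_le_mono) simp
    hence "64 \<le> \<epsilon> * sqrt (real n)" using e by (simp add: real_sqrt_mult)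
    hence "64 * sqrt (real n) \<le> \<epsilon> * sqrt (real n) * sqrt (real n)" by (simp add: mult_right_mono)
    also have "\<dots> = \<epsilon> * real n" by (simp add: mult.assoc)
    finally show ?thesis .
  qed
  finally show ?thesis by simp
qed




lemma powr23_le:
  fixes x :: real and p :: nat
  assumes x: "0 \<le> x" and h: "x^2 \<le> real p^3"
  shows "x powr (2/3) \<le> real p"
proof (rule ccontr)
  assume "\<not> ?thesis"
  hence lt: "real p < x powr (2/3)" by simp
  have "real p ^ 3 < (x powr (2/3))^3" using lt by (intro power_strict_mono) auto
  also have "(x powr (2/3))^3 = x^2"
  proof (cases "x = 0")
    case True then show ?thesis by simp
  next
    case False
    hence xp: "0 < x" using x by simp
    have "(x powr (2/3))^3 = (x powr (2/3)) powr (real 3)"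
      using xp by (simp add: powr_realpow)
    also have "\<dots> = x powr (2/3 * 3)" by (simp add: powr_powr)
    also have "\<dots> = x powr (real 2)" by simp
    also have "\<dots> = x^2" using xp by (rule powr_realpow)
    finally show ?thesis .
  qed
  finally show False using h by simp
qed

lemma part1:
  fixes \<omega> :: "int \<Rightarrow> real" and L :: "real \<Rightarrow> real" and S :: "real set"
  assumes bnd: "\<And>E t. E \<in> S \<Longrightarrow> \<bar>E - \<omega> t\<bar> \<le> b" and b0: "0 \<le> b"
    and e0: "0 < \<epsilon>" and e1: "\<epsilon> < 1"
    and H: "\<forall>(n::nat) (z::int) E. real n \<ge> max (real n0) ((ln (\<bar>z\<bar> + 1)) powr (2/3)) \<and> E \<in> S \<longrightarrow>
        \<bar>L E - (1 / (real n)^2) * (\<Sum>s<n^2. Fn n (shift (z + int s * int n) \<omega>) E)\<bar> < \<epsilon>"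
    and E: "E \<in> S" and Lb: "L E < ln (2*(b+1)) + 1"
    and N1: "n0^3 \<le> N" "P0^3 \<le> N" "2 \<le> P0" "48*(ln (2*(b+1))+1)/\<epsilon> \<le> real P0"
    and Nz: "(ln (\<bar>z\<bar>+1))^2 \<le> real N"
  shows "(1/real N) * ln (mnorm (tmn N E (shift z \<omega>))) \<le> L E + 2*\<epsilon>"
proof -
  define \<Lambda> where "\<Lambda> = ln (2*(b+1))"
  have \<Lambda>0: "0 \<le> \<Lambda>" unfolding \<Lambda>_def using b0 by simp
  have "(1::nat) \<le> P0^3" using N1(3) by (intro one_le_power) simp
  hence N0: "1 \<le> N" using N1(2) by linarith
  define p where "p = (LEAST p. N \<le> p^3)"
  have "N \<le> N^3" using N0 by (simp add: self_le_power)
  hence pN: "N \<le> p^3" unfolding p_def by (rule LeastI)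
  have p1: "1 \<le> p" using pN N0 by (cases p) auto
  have pm: "(p-1)^3 < N"
  proof -
    have "\<not> N \<le> (p-1)^3" unfolding p_def by (rule not_less_Least) (use p1 p_def in simp)
    thus ?thesis by simp
  qed
  have "n0^3 \<le> p^3" by (rule order.trans[OF N1(1) pN])
  hence pn0: "n0 \<le> p" using power_mono_iff[of n0 p 3] by simp
  have "P0^3 \<le> p^3" by (rule order.trans[OF N1(2) pN])
  hence pP0: "P0 \<le> p" using power_mono_iff[of P0 p 3] by simp
  define x where "x = ln (\<bar>real_of_int z\<bar>+1)"
  have x0: "0 \<le> x" unfolding x_def by simp
  have "real N \<le> real (p^3)" by (rule of_nat_mono[OF pN])
  hence "x^2 \<le> real p^3" using Nz unfolding x_def of_nat_power by linarith
  hence pz: "x powr (2/3) \<le> real p" by (rule powr23_le[OF x0])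
  have Hp: "\<bar>L E - (1 / (real p)^2) * (\<Sum>s<p^2. Fn p (shift (z + int s * int p) \<omega>) E)\<bar> < \<epsilon>"
    using H pn0 pz E unfolding x_def by auto
  define w where "w = shift z \<omega>"
  have bw: "\<And>t. \<bar>E - w t\<bar> \<le> b" unfolding w_def shift_def using bnd E by auto
  have Rp: "0 < real p" using p1 by simp
  have fid: "ln (mnorm (tmn p E (shift (int s * int p) w))) = real p * Fn p (shift (z + int s * int p) \<omega>) E" for s
    unfolding Fn_def w_def using Rp by simp
  have "ln (mnorm (tmn (p^2 * p) E w)) \<le> (\<Sum>s<p^2. ln (mnorm (tmn p E (shift (int s * int p) w))))"
    by (rule subadd)
  also have "\<dots> = real p * (\<Sum>s<p^2. Fn p (shift (z + int s * int p) \<omega>) E)"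
    unfolding fid by (simp add: sum_distrib_left)
  also have "\<dots> = real p ^ 3 * ((1 / (real p)^2) * (\<Sum>s<p^2. Fn p (shift (z + int s * int p) \<omega>) E))"
    using Rp by (simp add: power3_eq_cube power2_eq_square field_simps)
  also have "\<dots> \<le> real p ^ 3 * (L E + \<epsilon>)"
    using Hp Rp by (intro mult_left_mono) auto
  finally have S0: "ln (mnorm (tmn (p^2 * p) E w)) \<le> real p ^ 3 * (L E + \<epsilon>)" .
  have pp: "p^2 * p = p^3" by (simp add: power2_eq_square power3_eq_cube)
  have S1: "ln (mnorm (tmn (p^3) E w)) \<le> real p ^ 3 * (L E + \<epsilon>)" using S0 unfolding pp .
  define r where "r = p^3 - N"
  have pr: "p^3 = N + r" unfolding r_def using pN by simp
  have "tmn (p^3) E w = tmn r E (shift (int N) w) ** tmn N E w" unfolding pr by (rule tmn_add)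
  hence eqN: "tmninv r E (shift (int N) w) ** tmn (p^3) E w = tmn N E w"
    by (simp add: matrix_mul_assoc tmninv_tmn)
  have "mnorm (tmn N E w) \<le> mnorm (tmninv r E (shift (int N) w)) * mnorm (tmn (p^3) E w)"
    unfolding eqN[symmetric] by (rule mnorm_mult)
  also have "\<dots> \<le> (2*(b+1))^r * mnorm (tmn (p^3) E w)"
    using mnorm_tmninv_le[of E "shift (int N) w" b r] bw mnorm_nonneg
    by (intro mult_right_mono) (auto simp: shift_def)
  finally have mN: "mnorm (tmn N E w) \<le> (2*(b+1))^r * mnorm (tmn (p^3) E w)" .
  have "ln (mnorm (tmn N E w)) \<le> ln ((2*(b+1))^r * mnorm (tmn (p^3) E w))"
  proof -
    have Kp: "0 < (2*(b+1))^r" using b0 by simp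
    show ?thesis by (subst ln_le_cancel_iff[OF mnorm_tmn_gt0 mult_pos_pos[OF Kp mnorm_tmn_gt0]]) (rule mN)
  qed
  also have "\<dots> = real r * \<Lambda> + ln (mnorm (tmn (p^3) E w))"
  proof -
    have Kp: "0 < (2*(b+1))^r" using b0 by simp
    have "ln ((2*(b+1))^r * mnorm (tmn (p^3) E w)) = ln ((2*(b+1))^r) + ln (mnorm (tmn (p^3) E w))"
      by (rule ln_mult_pos[OF Kp mnorm_tmn_gt0])
    also have "ln ((2*(b+1))^r) = real r * \<Lambda>" unfolding \<Lambda>_def using b0 by (simp add: ln_realpow)
    finally show ?thesis .
  qed
  finally have S2: "ln (mnorm (tmn N E w)) \<le> real r * \<Lambda> + real p ^ 3 * (L E + \<epsilon>)" using S1 by linarith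
  define Rn where "Rn = real N"
  define Rr where "Rr = real r"
  define Rp where "Rp = real p"
  have "real (p^3) = real (N + r)" using pr by (simp only:)
  hence Rpr: "Rp^3 = Rn + Rr" unfolding Rp_def Rn_def Rr_def by simp
  have Rp2: "2 \<le> Rp" unfolding Rp_def using pP0 N1(3) by simp
  have Rr0: "0 \<le> Rr" unfolding Rr_def by simp
  have Rn0: "0 < Rn" unfolding Rn_def using N0 by simp
  have "real ((p-1)^3) < real N" using pm by (simp only: of_nat_less_iff)
  moreover have "real (p-1) = real p - 1" using p1 by (simp add: of_nat_diff)
  ultimately have pm': "(Rp - 1)^3 < Rn" unfolding Rp_def Rn_def by simp
  have "Rr = Rp^3 - Rn" using Rpr by simp
  also have "\<dots> < Rp^3 - (Rp-1)^3" using pm' by simp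
  also have "\<dots> = 3*Rp^2 - 3*Rp + 1" by (simp add: power3_eq_cube power2_eq_square algebra_simps)
  also have "\<dots> \<le> 3*Rp^2" using Rp2 by simp
  finally have Rr3: "Rr \<le> 3*Rp^2" by simp
  have "Rp^3 \<le> (2*(Rp-1))^3" using Rp2 by (intro power_mono) auto
  also have "\<dots> = 8*(Rp-1)^3" by (simp only: power_mult_distrib) simp
  finally have R8: "Rp^3 \<le> 8*Rn" using pm' by simp
  have "real P0 \<le> real p" using pP0 by (rule of_nat_mono)
  hence "48*(\<Lambda>+1)/\<epsilon> \<le> Rp" using N1(4) unfolding Rp_def \<Lambda>_def by linarith
  hence A2: "48*(\<Lambda>+1) \<le> \<epsilon>*Rp" using e0 by (simp add: pos_divide_le_eq mult.commute)
  have "Rr*(2*\<Lambda>+2) \<le> 3*Rp^2*(2*\<Lambda>+2)" using Rr3 \<Lambda>0 by (intro mult_right_mono) auto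
  also have "\<dots> = (Rp^2 * (48*(\<Lambda>+1))) / 8" by (simp add: algebra_simps)
  also have "\<dots> \<le> (Rp^2 * (\<epsilon>*Rp)) / 8" using A2 by (intro divide_right_mono mult_left_mono) auto
  also have "\<dots> = \<epsilon> * Rp^3 / 8" by (simp add: power3_eq_cube power2_eq_square algebra_simps)
  also have "\<dots> \<le> \<epsilon> * Rn" using R8 e0 by (simp add: field_simps)
  finally have A5: "Rr*(2*\<Lambda>+2) \<le> \<epsilon> * Rn" .
  have LE: "L E + \<epsilon> \<le> \<Lambda> + 2" using Lb e1 unfolding \<Lambda>_def by simp
  have "Rr * (\<Lambda> + (L E + \<epsilon>)) \<le> Rr * (2*\<Lambda>+2)" using LE Rr0 by (intro mult_left_mono) auto
  moreover have "Rp^3 * (L E + \<epsilon>) = Rn*(L E + \<epsilon>) + Rr*(L E + \<epsilon>)" using Rpr by (simp add: distrib_right)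
  moreover have "Rr * (\<Lambda> + (L E + \<epsilon>)) = Rr*\<Lambda> + Rr*(L E + \<epsilon>)" by (simp add: distrib_left)
  moreover have "Rn * (L E + 2*\<epsilon>) = Rn*(L E + \<epsilon>) + \<epsilon>*Rn" by (simp add: algebra_simps)
  moreover have "Rr * (2*\<Lambda>+2) \<le> \<epsilon> * Rn" by (rule A5)
  moreover have "ln (mnorm (tmn N E w)) \<le> Rr * \<Lambda> + Rp ^ 3 * (L E + \<epsilon>)" using S2 unfolding Rr_def Rp_def by simp
  ultimately have fin: "ln (mnorm (tmn N E w)) \<le> Rn * (L E + 2*\<epsilon>)" by linarith
  have "(1/Rn) * ln (mnorm (tmn N E w)) \<le> (1/Rn) * (Rn * (L E + 2*\<epsilon>))"
    using fin Rn0 by (intro mult_left_mono) auto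
  also have "\<dots> = L E + 2*\<epsilon>" using Rn0 by simp
  finally show ?thesis unfolding w_def Rn_def .
qed




lemma block:
  fixes \<omega> :: "int \<Rightarrow> real" and L :: "real \<Rightarrow> real"
  assumes bnd: "\<And>t. \<bar>E - \<omega> t\<bar> \<le> b" and b0: "0 \<le> b"
    and e0: "0 < \<epsilon>"
    and P1: "\<And>(N::nat) (z::int). real N \<ge> max (real n1) ((ln (\<bar>z\<bar> + 1))^2) \<Longrightarrow>
          (1 / real N) * ln (mnorm (tmn N E (shift z \<omega>))) \<le> L E + 2 * \<epsilon>"
    and Lb: "-2 < L E"
    and n1: "1 \<le> n1" and en1: "real n1 \<le> \<epsilon> * real n"
    and ez: "2 * (ln (\<bar>real_of_int z\<bar> + 1))^2 \<le> \<epsilon> * real n"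
    and en: "2 * (ln (real n + 1))^2 \<le> \<epsilon> * real n"
    and c: "c \<le> n" and z': "\<bar>z'\<bar> \<le> \<bar>z\<bar> + int n"
  shows "mnorm (tmn c E (shift z' \<omega>)) \<le> exp (real c * L E + 2*\<epsilon>*real n*(ln (2*(b+1))+2))"
proof -
  define \<Lambda> where "\<Lambda> = ln (2*(b+1))"
  have \<Lambda>0: "0 \<le> \<Lambda>" unfolding \<Lambda>_def using b0 by simp
  define \<mu> where "\<mu> = mnorm (tmn c E (shift z' \<omega>))"
  have \<mu>0: "0 < \<mu>" unfolding \<mu>_def by (rule mnorm_tmn_gt0)
  have cn: "real c \<le> real n" using c by simp
  have en0: "0 \<le> \<epsilon> * real n" using e0 by simp
  show ?thesis
  proof (cases "real c \<ge> max (real n1) ((ln (\<bar>real_of_int z'\<bar> + 1))^2)")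
    case True
    have h: "(1 / real c) * ln \<mu> \<le> L E + 2 * \<epsilon>" unfolding \<mu>_def by (rule P1) (use True in simp)
    have c0: "0 < real c" using True n1 by simp
    have "ln \<mu> = real c * ((1 / real c) * ln \<mu>)" using c0 by simp
    also have "\<dots> \<le> real c * (L E + 2 * \<epsilon>)" using h c0 by (intro mult_left_mono) auto
    also have "\<dots> = real c * L E + 2 * (\<epsilon> * real c)" by (simp add: algebra_simps)
    also have "\<epsilon> * real c \<le> \<epsilon> * real n" using cn e0 by simp
    also have "\<epsilon> * real n \<le> \<epsilon> * real n * (\<Lambda> + 2)" using en0 \<Lambda>0 by (simp add: mult_le_cancel_left1)
    finally have "ln \<mu> \<le> real c * L E + 2*\<epsilon>*real n*(\<Lambda>+2)" by (simp add: mult.assoc)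
    hence "exp (ln \<mu>) \<le> exp (real c * L E + 2*\<epsilon>*real n*(\<Lambda>+2))" by simp
    thus ?thesis using \<mu>0 unfolding \<mu>_def \<Lambda>_def by simp
  next
    case False
    have cs: "real c \<le> 2 * (\<epsilon> * real n)"
    proof (cases "real c < real n1")
      case True then show ?thesis using en1 en0 by linarith
    next
      case False2: False
      hence lt: "real c < (ln (\<bar>real_of_int z'\<bar> + 1))^2" using False by simp
      define a where "a = ln (\<bar>real_of_int z\<bar> + 1)"
      define a' where "a' = ln (real n + 1)"
      have a0: "0 \<le> a" "0 \<le> a'" unfolding a_def a'_def by auto
      have "\<bar>real_of_int z'\<bar> + 1 \<le> (\<bar>real_of_int z\<bar> + 1) * (real n + 1)"
      proof -
        have "\<bar>real_of_int z'\<bar> \<le> \<bar>real_of_int z\<bar> + real n" using z' by linarith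
        moreover have "0 \<le> \<bar>real_of_int z\<bar> * real n" by simp
        moreover have "(\<bar>real_of_int z\<bar> + 1) * (real n + 1) = \<bar>real_of_int z\<bar> * real n + \<bar>real_of_int z\<bar> + real n + 1"
          by (simp add: algebra_simps)
        ultimately show ?thesis by linarith
      qed
      hence "ln (\<bar>real_of_int z'\<bar> + 1) \<le> ln ((\<bar>real_of_int z\<bar> + 1) * (real n + 1))" by simp
      also have "\<dots> = a + a'" unfolding a_def a'_def by (simp add: ln_mult_pos)
      finally have l: "ln (\<bar>real_of_int z'\<bar> + 1) \<le> a + a'" .
      have "(ln (\<bar>real_of_int z'\<bar> + 1))^2 \<le> (a + a')^2" using l by (intro power_mono) auto
      also have "\<dots> \<le> 2*a^2 + 2*a'^2"
      proof -
        have "0 \<le> (a - a')^2" by simp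
        moreover have "(a+a')^2 + (a-a')^2 = 2*a^2+2*a'^2" by (simp add: power2_eq_square algebra_simps)
        ultimately show ?thesis by linarith
      qed
      finally show ?thesis using lt ez en unfolding a_def a'_def by linarith
    qed
    have "\<mu> \<le> (2*(b+1))^c" unfolding \<mu>_def by (rule mnorm_tmn_le) (use bnd in \<open>auto simp: shift_def\<close>)
    also have "\<dots> = exp (real c * \<Lambda>)" unfolding \<Lambda>_def using b0 by (simp add: exp_of_nat_mult[symmetric] ln_realpow[symmetric])
    also have "real c * \<Lambda> \<le> real c * L E + 2*\<epsilon>*real n*(\<Lambda>+2)"
    proof -
      have "real c * \<Lambda> \<le> real c * (L E + (\<Lambda> + 2))" using Lb by (intro mult_left_mono) auto
      also have "\<dots> = real c * L E + real c * (\<Lambda> + 2)" by (simp add: algebra_simps)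
      also have "real c * (\<Lambda> + 2) \<le> (2*(\<epsilon>*real n)) * (\<Lambda> + 2)" using cs \<Lambda>0 by (intro mult_right_mono) auto
      finally show ?thesis by (simp add: mult.assoc)
    qed
    finally show ?thesis unfolding \<Lambda>_def \<mu>_def by simp
  qed
qed




lemma abs_P_le: "\<bar>P (\<lambda>t. w (int t) - E) a\<bar> \<le> mnorm (tmn a E w)"
proof -
  have "(tmn a E w) $ 1 $ 1 = (-1)^a * P (\<lambda>t. w (int t) - E) a" using tmn_P by blast
  hence "\<bar>P (\<lambda>t. w (int t) - E) a\<bar> = \<bar>(tmn a E w) $ 1 $ 1\<bar>" by (simp add: abs_mult)
  also have "\<dots> \<le> mnorm (tmn a E w)" by (rule mnorm_entry)
  finally show ?thesis .
qed

theorem corollary5p3: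
  fixes m :: "real measure"
  assumes "prob_space m" and "sets m = sets borel"
    and "compact (msupp m)"
    and "\<exists>a b. a \<in> msupp m \<and> b \<in> msupp m \<and> a \<noteq> b"
  shows "\<exists>C0 > 0. \<forall>\<epsilon> :: real. \<forall>\<omega> :: int \<Rightarrow> real.
     0 < \<epsilon> \<and> \<epsilon> < 1 \<and> (\<forall>n. \<omega> n \<in> msupp m) \<and>
     (\<exists>n0 :: nat. \<forall>(n :: nat) (z :: int) E.
        real n \<ge> max (real n0) ((ln (\<bar>z\<bar> + 1)) powr (2/3)) \<and> E \<in> SigmaHat m \<longrightarrow>
        \<bar>lyap m E - (1 / (real n)^2) * (\<Sum>s<n^2. Fn n (shift (z + int s * int n) \<omega>) E)\<bar> < \<epsilon>)
     \<longrightarrow>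
     (\<exists>n1 :: nat.
       (\<forall>E \<in> SigmaHat m. \<forall>(n :: nat) (z :: int).
          real n \<ge> max (real n1) ((ln (\<bar>z\<bar> + 1))^2) \<longrightarrow>
          (1 / real n) * ln (mnorm (tmn n E (shift z \<omega>))) \<le> lyap m E + 2 * \<epsilon>) \<and>
       (\<forall>(n :: nat) (z :: int) E j k.
          real n \<ge> (1 / \<epsilon>) * max (real n1) (2 * (ln (\<bar>z\<bar> + 1))^2) \<and>
          E \<in> SigmaHat m - spec (Hres (shift z \<omega>) n) \<and> j < n \<and> k < n \<longrightarrow>
          \<bar>green (shift z \<omega>) n E j k\<bar>
            \<le> exp ((real n - \<bar>real j - real k\<bar>) * lyap m E + C0 * \<epsilon> * real n)
               / \<bar>Determinant.det (shifted (Hres (shift z \<omega>) n) E)\<bar>))"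
proof -
  define B where "B = Sup (abs ` msupp m)"
  have "bounded (msupp m)" using assms(3) by (rule compact_imp_bounded)
  then obtain M where M: "\<And>x. x \<in> msupp m \<Longrightarrow> \<bar>x\<bar> \<le> M" unfolding bounded_iff by auto
  have bdd: "bdd_above (abs ` msupp m)" using M by (auto intro!: bdd_aboveI2)
  have absB: "\<And>a. a \<in> msupp m \<Longrightarrow> \<bar>a\<bar> \<le> B" unfolding B_def using bdd by (auto intro: cSup_upper)
  obtain a0 where a0: "a0 \<in> msupp m" using assms(4) by auto
  have B0: "0 \<le> B" using absB[OF a0] by linarith
  define b where "b = 2*B + 2"
  have b0: "0 \<le> b" unfolding b_def using B0 by simp
  define \<Lambda> where "\<Lambda> = ln (2*(b+1))"
  have \<Lambda>0: "0 \<le> \<Lambda>" unfolding \<Lambda>_def using b0 by simp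
  have SH: "\<And>E. E \<in> SigmaHat m \<Longrightarrow> \<bar>E\<bar> \<le> 2 + B"
    unfolding SigmaHat_def kappa_def B_def by auto
  show ?thesis
  proof (rule exI[of _ "4*\<Lambda>+10"], intro conjI allI impI)
    show "0 < 4*\<Lambda>+10" using \<Lambda>0 by simp
  next
    fix \<epsilon> :: real and \<omega> :: "int \<Rightarrow> real"
    assume hyp: "0 < \<epsilon> \<and> \<epsilon> < 1 \<and> (\<forall>n. \<omega> n \<in> msupp m) \<and>
     (\<exists>n0 :: nat. \<forall>(n :: nat) (z :: int) E.
        real n \<ge> max (real n0) ((ln (\<bar>z\<bar> + 1)) powr (2/3)) \<and> E \<in> SigmaHat m \<longrightarrow>
        \<bar>lyap m E - (1 / (real n)^2) * (\<Sum>s<n^2. Fn n (shift (z + int s * int n) \<omega>) E)\<bar> < \<epsilon>)"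
    hence e0: "0 < \<epsilon>" and e1: "\<epsilon> < 1" and osupp: "\<And>n. \<omega> n \<in> msupp m" by auto
    from hyp obtain n0 :: nat where H: "\<forall>(n :: nat) (z :: int) E.
        real n \<ge> max (real n0) ((ln (\<bar>z\<bar> + 1)) powr (2/3)) \<and> E \<in> SigmaHat m \<longrightarrow>
        \<bar>lyap m E - (1 / (real n)^2) * (\<Sum>s<n^2. Fn n (shift (z + int s * int n) \<omega>) E)\<bar> < \<epsilon>" by blast
    have bnd: "\<And>E t. E \<in> SigmaHat m \<Longrightarrow> \<bar>E - \<omega> t\<bar> \<le> b"
    proof -
      fix E t assume "E \<in> SigmaHat m"
      hence "\<bar>E\<bar> \<le> 2 + B" by (rule SH)
      moreover have "\<bar>\<omega> t\<bar> \<le> B" using absB osupp by blast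
      ultimately show "\<bar>E - \<omega> t\<bar> \<le> b" unfolding b_def by linarith
    qed
    have Lbd: "-2 < lyap m E \<and> lyap m E < \<Lambda> + 1" if E: "E \<in> SigmaHat m" for E
    proof -
      define q where "q = max n0 1"
      have q1: "1 \<le> q" unfolding q_def by simp
      have Rq: "0 < real q" using q1 by simp
      have "real q \<ge> max (real n0) ((ln (\<bar>0::int\<bar> + 1)) powr (2/3))" unfolding q_def by simp
      hence Hq: "\<bar>lyap m E - (1 / (real q)^2) * (\<Sum>s<q^2. Fn q (shift (0 + int s * int q) \<omega>) E)\<bar> < \<epsilon>"
        using H E by blast
      define f where "f s = Fn q (shift (0 + int s * int q) \<omega>) E" for s
      have fb: "- 1 \<le> f s \<and> f s \<le> \<Lambda>" for s
      proof -
        have "\<And>t. \<bar>E - shift (0 + int s * int q) \<omega> t\<bar> \<le> b" unfolding shift_def using bnd E by blast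
        thus ?thesis unfolding f_def \<Lambda>_def using Fn_bounds[OF _ b0 q1] by blast
      qed
      have "(\<Sum>s<q^2. f s) \<le> of_nat (card {..<q^2}) * \<Lambda>" by (rule sum_bounded_above) (use fb in auto)
      hence s1: "(\<Sum>s<q^2. f s) \<le> real q^2 * \<Lambda>" by simp
      have "of_nat (card {..<q^2}) * (-1) \<le> (\<Sum>s<q^2. f s)" by (rule sum_bounded_below) (use fb in auto)
      hence s2: "- (real q^2) \<le> (\<Sum>s<q^2. f s)" by simp
      have Rq2: "0 < real q ^ 2" using Rq by simp
      have a1: "(1 / (real q)^2) * (\<Sum>s<q^2. f s) \<le> \<Lambda>"
        using s1 Rq2 by (simp add: field_simps)
      have a2: "-1 \<le> (1 / (real q)^2) * (\<Sum>s<q^2. f s)"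
        using s2 Rq2 by (simp add: field_simps)
      show ?thesis using Hq a1 a2 e1 unfolding f_def by linarith
    qed
    define P0 :: nat where "P0 = nat \<lceil>48*(\<Lambda>+1)/\<epsilon>\<rceil> + 2"
    define T :: nat where "T = nat \<lceil>4096/\<epsilon>^2\<rceil> + 1"
    define n1 :: nat where "n1 = max (max 1 (n0^3)) (max (P0^3) T)"
    have P0a: "48*(\<Lambda>+1)/\<epsilon> \<le> real P0" unfolding P0_def by linarith
    have P0b: "2 \<le> P0" unfolding P0_def by simp
    have Ta: "4096/\<epsilon>^2 \<le> real T" unfolding T_def by linarith
    have n1a: "1 \<le> n1" "n0^3 \<le> n1" "P0^3 \<le> n1" "T \<le> n1" unfolding n1_def by auto
    have part1': "(1 / real n) * ln (mnorm (tmn n E (shift z \<omega>))) \<le> lyap m E + 2 * \<epsilon>"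
      if E: "E \<in> SigmaHat m" and nh: "real n \<ge> max (real n1) ((ln (\<bar>z\<bar> + 1))^2)" for E :: real and n :: nat and z :: int
    proof -
      have nn1: "n1 \<le> n" using nh by simp
      have n03: "n0^3 \<le> n" using nn1 n1a by linarith
      have P03: "P0^3 \<le> n" using nn1 n1a by linarith
      have Nz: "(ln (\<bar>real_of_int z\<bar>+1))^2 \<le> real n" using nh by simp
      have Lb': "lyap m E < ln (2*(b+1)) + 1" using Lbd[OF E] unfolding \<Lambda>_def by simp
      have P0a': "48*(ln (2*(b+1))+1)/\<epsilon> \<le> real P0" using P0a unfolding \<Lambda>_def .
      show ?thesis by (rule part1[OF bnd b0 e0 e1 H E Lb' n03 P03 P0b P0a' Nz])
    qed
    show "\<exists>n1 :: nat.
       (\<forall>E \<in> SigmaHat m. \<forall>(n :: nat) (z :: int).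
          real n \<ge> max (real n1) ((ln (\<bar>z\<bar> + 1))^2) \<longrightarrow>
          (1 / real n) * ln (mnorm (tmn n E (shift z \<omega>))) \<le> lyap m E + 2 * \<epsilon>) \<and>
       (\<forall>(n :: nat) (z :: int) E j k.
          real n \<ge> (1 / \<epsilon>) * max (real n1) (2 * (ln (\<bar>z\<bar> + 1))^2) \<and>
          E \<in> SigmaHat m - spec (Hres (shift z \<omega>) n) \<and> j < n \<and> k < n \<longrightarrow>
          \<bar>green (shift z \<omega>) n E j k\<bar>
            \<le> exp ((real n - \<bar>real j - real k\<bar>) * lyap m E + (4*\<Lambda>+10) * \<epsilon> * real n)
               / \<bar>Determinant.det (shifted (Hres (shift z \<omega>) n) E)\<bar>)"
    proof (rule exI[of _ n1], intro conjI ballI allI impI)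
      fix E :: real and n :: nat and z :: int assume "E \<in> SigmaHat m" "real n \<ge> max (real n1) ((ln (\<bar>z\<bar> + 1))^2)"
      thus "(1 / real n) * ln (mnorm (tmn n E (shift z \<omega>))) \<le> lyap m E + 2 * \<epsilon>" by (rule part1')
    next
      fix n :: nat and z :: int and E :: real and j k :: nat
      assume h2: "real n \<ge> (1 / \<epsilon>) * max (real n1) (2 * (ln (\<bar>z\<bar> + 1))^2) \<and>
          E \<in> SigmaHat m - spec (Hres (shift z \<omega>) n) \<and> j < n \<and> k < n"
      hence nh: "real n \<ge> (1 / \<epsilon>) * max (real n1) (2 * (ln (\<bar>z\<bar> + 1))^2)"
        and E: "E \<in> SigmaHat m" and Esp: "E \<notin> spec (Hres (shift z \<omega>) n)" and j: "j < n" and k: "k < n" by auto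
      have "\<epsilon> * real n \<ge> max (real n1) (2 * (ln (\<bar>z\<bar> + 1))^2)"
        using nh e0 by (simp add: field_simps)
      hence en1: "real n1 \<le> \<epsilon> * real n" and ez: "2 * (ln (\<bar>real_of_int z\<bar> + 1))^2 \<le> \<epsilon> * real n" by auto
      have "real n1 \<le> real n"
      proof -
        have "\<epsilon> * real n \<le> 1 * real n" using e1 by (intro mult_right_mono) auto
        thus ?thesis using en1 by linarith
      qed
      hence "T \<le> n" using n1a by simp
      hence "4096/\<epsilon>^2 \<le> real n" using Ta by (meson of_nat_le_iff order_trans)
      hence en: "2 * (ln (real n + 1))^2 \<le> \<epsilon> * real n" by (rule ln_growth[OF e0]) (use j in simp)
      have en1': "1 \<le> \<epsilon> * real n" using en1 n1a by linarith
      define w where "w = shift z \<omega>"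
      define M where "M = max j k"
      define a where "a = min j k"
      define c2 where "c2 = n - Suc M"
      have Mn: "M < n" unfolding M_def using j k by simp
      have P1: "\<And>(N::nat) (z::int). real N \<ge> max (real n1) ((ln (\<bar>z\<bar> + 1))^2) \<Longrightarrow>
          (1 / real N) * ln (mnorm (tmn N E (shift z \<omega>))) \<le> lyap m E + 2 * \<epsilon>"
        using part1'[OF E] by blast
      have Lb: "-2 < lyap m E" using Lbd[OF E] by simp
      have bndE: "\<And>t. \<bar>E - \<omega> t\<bar> \<le> b" using bnd[OF E] .
      define X where "X = 2*\<epsilon>*real n*(\<Lambda>+2)"
      have B1: "mnorm (tmn a E (shift z \<omega>)) \<le> exp (real a * lyap m E + X)"
        unfolding X_def \<Lambda>_def
        by (rule block[where L="lyap m", OF bndE b0 e0 P1 Lb n1a(1) en1 ez en]) (use j in \<open>auto simp: a_def\<close>)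
      have B2: "mnorm (tmn c2 E (shift (z + int (Suc M)) \<omega>)) \<le> exp (real c2 * lyap m E + X)"
        unfolding X_def \<Lambda>_def
        by (rule block[where L="lyap m", OF bndE b0 e0 P1 Lb n1a(1) en1 ez en]) (use Mn in \<open>auto simp: c2_def\<close>)
      have gb: "\<bar>green w n E j k\<bar> * \<bar>Determinant.det (Am w n E)\<bar> =
         \<bar>P (\<lambda>t. w (int t) - E) a\<bar> * \<bar>Qf (\<lambda>t. w (int t) - E) n (Suc M)\<bar>"
        unfolding a_def M_def w_def by (rule green_bound[OF Esp j k])
      have q1: "\<bar>P (\<lambda>t. w (int t) - E) a\<bar> \<le> mnorm (tmn a E (shift z \<omega>))"
        unfolding w_def by (rule abs_P_le)
      have q2: "\<bar>Qf (\<lambda>t. w (int t) - E) n (Suc M)\<bar> \<le> mnorm (tmn c2 E (shift (z + int (Suc M)) \<omega>))"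
        unfolding Qf_shift c2_def w_def using abs_P_le[of "shift (int (Suc M)) (shift z \<omega>)" E "n - Suc M"] by simp
      have "\<bar>green w n E j k\<bar> * \<bar>Determinant.det (Am w n E)\<bar> \<le> exp (real a * lyap m E + X) * exp (real c2 * lyap m E + X)"
        unfolding gb by (rule mult_mono[OF order.trans[OF q1 B1] order.trans[OF q2 B2]]) auto
      also have "\<dots> = exp ((real a + real c2) * lyap m E + 2*X)" by (simp add: exp_add[symmetric] algebra_simps)
      also have "\<dots> \<le> exp ((real n - \<bar>real j - real k\<bar>) * lyap m E + (4*\<Lambda>+10) * \<epsilon> * real n)"
      proof -
        have ac: "real n - \<bar>real j - real k\<bar> = real a + real c2 + 1"
          unfolding a_def c2_def M_def using j k by (cases "j \<le> k") (auto simp: of_nat_diff)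
        have "(4*\<Lambda>+10) * \<epsilon> * real n = 2*X + 2*(\<epsilon> * real n)" unfolding X_def by (simp add: algebra_simps)
        moreover have "(real a + real c2 + 1) * lyap m E = (real a + real c2) * lyap m E + lyap m E" by (simp add: algebra_simps)
        ultimately show ?thesis unfolding ac using Lb en1' by simp
      qed
      finally have fin: "\<bar>green w n E j k\<bar> * \<bar>Determinant.det (Am w n E)\<bar> \<le> exp ((real n - \<bar>real j - real k\<bar>) * lyap m E + (4*\<Lambda>+10) * \<epsilon> * real n)" .
      have dpos: "0 < \<bar>Determinant.det (Am w n E)\<bar>" using det_nonzero[OF Esp] unfolding w_def by simp
      show "\<bar>green (shift z \<omega>) n E j k\<bar>
            \<le> exp ((real n - \<bar>real j - real k\<bar>) * lyap m E + (4*\<Lambda>+10) * \<epsilon> * real n)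
               / \<bar>Determinant.det (shifted (Hres (shift z \<omega>) n) E)\<bar>"
        using fin dpos unfolding w_def by (simp add: pos_le_divide_eq)
    qed
  qed
qed



end
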